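(* For every NFA $\mathcal A$, the relation $P(\sqsubset^{\mathrm{bw}},\subseteq^{\mathrm{fw}})$ is good for pruning on NFA: $\mathcal L(\mathrm{Prune}(\mathcal A,P(\sqsubset^{\mathrm{bw}},\subseteq^{\mathrm{fw}})))=\mathcal L(\mathcal A)$.
   Context: An NFA is $\mathcal A=(\Sigma,Q,I,F,\delta)$, $\delta\subseteq Q\times\Sigma\times Q$, assumed forward and backward complete (every state has, for every symbol, an incoming and an outgoing transition with that symbol); its language is the set of finite words having a finite trace starting in $I$ and ending in $F$. Backward finite-word simulation $\sqsubseteq^{\mathrm{bw}}$: in the game from $(p_0,q_0)$, at round $i$ from $(p_i,q_i)$ Spoiler picks $p_{i+1}\xrightarrow{\sigma_i}p_i$ and Duplicator answers $q_{i+1}\xrightarrow{\sigma_i}q_i$; Duplicator wins the infinite play if $p_i\in I\Rightarrow q_i\in I$ for all $i$; $p\sqsubseteq^{\mathrm{bw}}q$ iff she has a winning strategy; $\sqsubset^{\mathrm{bw}}$ is its strict part. Forward finite trace inclusion: $p\subseteq^{\mathrm{fw}}q$ iff for every finite word $w$, if some $w$-trace from $p$ ends in $F$ then some $w$-trace from $q$ ends in $F$. $\mathrm{Prune}(\mathcal A,P)$ has transition set $\{t\in\delta:\nexists t'\in\delta,(t,t')\in P\}$; $P(R_b,R_f)=\{((p,\sigma,r),(p',\sigma,r'))\in\delta\times\delta:p\,R_b\,p',\ r\,R_f\,r'\}$. *)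

theory Defs
  imports Main
begin

definition nfa :: "'a set \<Rightarrow> 'q set \<Rightarrow> 'q set \<Rightarrow> 'q set \<Rightarrow> ('q \<times> 'a \<times> 'q) set \<Rightarrow> bool" where
  "nfa \<Sigma> Q I F \<delta> \<longleftrightarrow> finite \<Sigma> \<and> finite Q \<and> I \<subseteq> Q \<and> F \<subseteq> Q \<and> \<delta> \<subseteq> Q \<times> \<Sigma> \<times> Q"

definition complete_nfa :: "'a set \<Rightarrow> 'q set \<Rightarrow> ('q \<times> 'a \<times> 'q) set \<Rightarrow> bool" where
  "complete_nfa \<Sigma> Q \<delta> \<longleftrightarrow>
     (\<forall>q\<in>Q. \<forall>a\<in>\<Sigma>. (\<exists>r. (q, a, r) \<in> \<delta>) \<and> (\<exists>p. (p, a, q) \<in> \<delta>))"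

fun path :: "('q \<times> 'a \<times> 'q) set \<Rightarrow> 'q \<Rightarrow> 'a list \<Rightarrow> 'q \<Rightarrow> bool" where
  "path \<delta> p [] r \<longleftrightarrow> p = r"
| "path \<delta> p (a # w) r \<longleftrightarrow> (\<exists>p'. (p, a, p') \<in> \<delta> \<and> path \<delta> p' w r)"

definition lang :: "'a set \<Rightarrow> 'q set \<Rightarrow> 'q set \<Rightarrow> ('q \<times> 'a \<times> 'q) set \<Rightarrow> 'a list set" where
  "lang \<Sigma> I F \<delta> = {w \<in> lists \<Sigma>. \<exists>p\<in>I. \<exists>r\<in>F. path \<delta> p w r}"

text \<open>A Duplicator strategy maps the history of positions
  (p_0,q_0),...,(p_i,q_i) together with Spoiler's move (p_{i+1}, sigma_i) to q_{i+1}.\<close>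
fun bw_hist :: "(('q \<times> 'q) list \<Rightarrow> 'q \<Rightarrow> 'a \<Rightarrow> 'q) \<Rightarrow> 'q \<Rightarrow> 'q \<Rightarrow> (nat \<Rightarrow> 'q) \<Rightarrow> (nat \<Rightarrow> 'a)
    \<Rightarrow> nat \<Rightarrow> ('q \<times> 'q) list" where
  "bw_hist S p0 q0 ps \<sigma>s 0 = [(p0, q0)]"
| "bw_hist S p0 q0 ps \<sigma>s (Suc i) =
     bw_hist S p0 q0 ps \<sigma>s i @ [(ps (Suc i), S (bw_hist S p0 q0 ps \<sigma>s i) (ps (Suc i)) (\<sigma>s i))]"

definition bw_dup_pos :: "(('q \<times> 'q) list \<Rightarrow> 'q \<Rightarrow> 'a \<Rightarrow> 'q) \<Rightarrow> 'q \<Rightarrow> 'q \<Rightarrow> (nat \<Rightarrow> 'q) \<Rightarrow> (nat \<Rightarrow> 'a)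
    \<Rightarrow> nat \<Rightarrow> 'q" where
  "bw_dup_pos S p0 q0 ps \<sigma>s i = snd (last (bw_hist S p0 q0 ps \<sigma>s i))"

definition bw_winning :: "('q \<times> 'a \<times> 'q) set \<Rightarrow> 'q set \<Rightarrow> (('q \<times> 'q) list \<Rightarrow> 'q \<Rightarrow> 'a \<Rightarrow> 'q)
    \<Rightarrow> 'q \<Rightarrow> 'q \<Rightarrow> bool" where
  "bw_winning \<delta> I S p0 q0 \<longleftrightarrow>
     (\<forall>ps \<sigma>s. ps 0 = p0 \<and> (\<forall>i. (ps (Suc i), \<sigma>s i, ps i) \<in> \<delta>) \<longrightarrow>
        (\<forall>i. (bw_dup_pos S p0 q0 ps \<sigma>s (Suc i), \<sigma>s i, bw_dup_pos S p0 q0 ps \<sigma>s i) \<in> \<delta>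
             \<and> (ps i \<in> I \<longrightarrow> bw_dup_pos S p0 q0 ps \<sigma>s i \<in> I)))"

definition bw_sim :: "('q \<times> 'a \<times> 'q) set \<Rightarrow> 'q set \<Rightarrow> 'q \<Rightarrow> 'q \<Rightarrow> bool" where
  "bw_sim \<delta> I p q \<longleftrightarrow> (\<exists>S. bw_winning \<delta> I S p q)"

definition bw_sim_strict :: "('q \<times> 'a \<times> 'q) set \<Rightarrow> 'q set \<Rightarrow> 'q \<Rightarrow> 'q \<Rightarrow> bool" where
  "bw_sim_strict \<delta> I p q \<longleftrightarrow> bw_sim \<delta> I p q \<and> \<not> bw_sim \<delta> I q p"

definition fw_incl :: "('q \<times> 'a \<times> 'q) set \<Rightarrow> 'q set \<Rightarrow> 'q \<Rightarrow> 'q \<Rightarrow> bool" where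
  "fw_incl \<delta> F p q \<longleftrightarrow>
     (\<forall>w. (\<exists>r\<in>F. path \<delta> p w r) \<longrightarrow> (\<exists>r\<in>F. path \<delta> q w r))"

definition prune_rel :: "('q \<Rightarrow> 'q \<Rightarrow> bool) \<Rightarrow> ('q \<Rightarrow> 'q \<Rightarrow> bool) \<Rightarrow> ('q \<times> 'a \<times> 'q) set
    \<Rightarrow> (('q \<times> 'a \<times> 'q) \<times> ('q \<times> 'a \<times> 'q)) set" where
  "prune_rel Rb Rf \<delta> = {((p, a, r), (p', a', r')). (p, a, r) \<in> \<delta> \<and> (p', a', r') \<in> \<delta> \<and>
       a' = a \<and> Rb p p' \<and> Rf r r'}"

definition prune :: "('q \<times> 'a \<times> 'q) set \<Rightarrow> (('q \<times> 'a \<times> 'q) \<times> ('q \<times> 'a \<times> 'q)) set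
    \<Rightarrow> ('q \<times> 'a \<times> 'q) set" where
  "prune \<delta> P = {t \<in> \<delta>. \<not> (\<exists>t'\<in>\<delta>. (t, t') \<in> P)}"

end

theory Submission
  imports Defs
begin

lemma path_trace:
  "path \<delta> p u r \<longleftrightarrow> (\<exists>ts. ts 0 = p \<and> ts (length u) = r \<and> (\<forall>j<length u. (ts j, u!j, ts (Suc j)) \<in> \<delta>))"
proof (induction u arbitrary: p)
  case Nil then show ?case by auto
next
  case (Cons a u)
  show ?case
  proof
    assume "path \<delta> p (a#u) r"
    then obtain p' where 1: "(p,a,p')\<in>\<delta>" "path \<delta> p' u r" by auto
    then obtain ts where ts: "ts 0 = p'" "ts (length u) = r" "\<forall>j<length u. (ts j, u!j, ts (Suc j)) \<in> \<delta>"
      using Cons.IH by blast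
    have "\<forall>j<length (a#u). (case_nat p ts j, (a#u)!j, case_nat p ts (Suc j)) \<in> \<delta>"
    proof (intro allI impI)
      fix j assume "j < length (a#u)"
      then show "(case_nat p ts j, (a#u)!j, case_nat p ts (Suc j)) \<in> \<delta>"
        using 1 ts by (cases j) auto
    qed
    then show "\<exists>ts. ts 0 = p \<and> ts (length (a#u)) = r \<and> (\<forall>j<length (a#u). (ts j, (a#u)!j, ts (Suc j)) \<in> \<delta>)"
      using ts by (intro exI[of _ "case_nat p ts"]) auto
  next
    assume "\<exists>ts. ts 0 = p \<and> ts (length (a#u)) = r \<and> (\<forall>j<length (a#u). (ts j, (a#u)!j, ts (Suc j)) \<in> \<delta>)"
    then obtain ts where ts: "ts 0 = p" "ts (Suc (length u)) = r"
      "\<forall>j<Suc (length u). (ts j, (a#u)!j, ts (Suc j)) \<in> \<delta>" by auto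
    have "(p, a, ts 1) \<in> \<delta>" using ts(1) ts(3)[rule_format, of 0] by simp
    moreover have "\<forall>j<length u. (ts (Suc j), u!j, ts (Suc (Suc j))) \<in> \<delta>"
      using ts(3) by auto
    then have "path \<delta> (ts 1) u r"
      using Cons.IH[of "ts 1"] ts(2) by (auto intro!: exI[of _ "\<lambda>j. ts (Suc j)"])
    ultimately show "path \<delta> p (a#u) r" by auto
  qed
qed

lemma path_mono: "\<delta> \<subseteq> \<delta>' \<Longrightarrow> path \<delta> p u r \<Longrightarrow> path \<delta>' p u r"
  by (induction u arbitrary: p) auto

lemma hist_ne: "bw_hist S p q ps \<sigma>s i \<noteq> []" by (cases i) auto
lemma dup0: "bw_dup_pos S p q ps \<sigma>s 0 = q" by (simp add: bw_dup_pos_def)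
lemma dupSuc: "bw_dup_pos S p q ps \<sigma>s (Suc i) = S (bw_hist S p q ps \<sigma>s i) (ps (Suc i)) (\<sigma>s i)"
  by (simp add: bw_dup_pos_def)
lemma last_hist: "snd (last (bw_hist S p q ps \<sigma>s i)) = bw_dup_pos S p q ps \<sigma>s i"
  by (simp add: bw_dup_pos_def)

lemma play_exists:
  assumes "complete_nfa \<Sigma> Q \<delta>" "\<Sigma> \<noteq> {}" "nfa \<Sigma> Q I F \<delta>" "x \<in> Q"
  shows "\<exists>ps \<sigma>s. ps 0 = x \<and> (\<forall>i. (ps (Suc i), \<sigma>s i, ps i) \<in> \<delta>)"
proof -
  obtain a where a: "a \<in> \<Sigma>" using assms(2) by blast
  define pr where "pr y = (SOME z. (z,a,y) \<in> \<delta>)" for y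
  have pr: "(pr y, a, y) \<in> \<delta>" if "y \<in> Q" for y
    unfolding pr_def by (rule someI_ex) (use assms(1) a that in \<open>auto simp: complete_nfa_def\<close>)
  have dQ: "\<delta> \<subseteq> Q \<times> \<Sigma> \<times> Q" using assms(3) by (simp add: nfa_def)
  define ps where "ps i = (pr ^^ i) x" for i
  have psS: "ps (Suc i) = pr (ps i)" for i by (simp add: ps_def)
  have inQ: "ps i \<in> Q" for i
  proof (induction i)
    case 0 then show ?case using assms(4) by (simp add: ps_def)
  next
    case (Suc i) then have "(pr (ps i), a, ps i) \<in> \<delta>" using pr by blast
    then show ?case using dQ psS by auto
  qed
  show ?thesis
    using pr inQ psS by (intro exI[of _ ps] exI[of _ "\<lambda>_. a"]) (simp add: ps_def)
qed

lemma bw_sim_props: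
  assumes nfa: "nfa \<Sigma> Q I F \<delta>" and cmp: "complete_nfa \<Sigma> Q \<delta>" and ne: "\<Sigma> \<noteq> {}"
    and pQ: "p \<in> Q" and s: "bw_sim \<delta> I p q"
  shows "(p \<in> I \<longrightarrow> q \<in> I) \<and> (\<forall>p' a. (p',a,p) \<in> \<delta> \<longrightarrow> (\<exists>q'. (q',a,q) \<in> \<delta> \<and> bw_sim \<delta> I p' q'))"
proof -
  obtain S where S: "bw_winning \<delta> I S p q" using s by (auto simp: bw_sim_def)
  have dQ: "\<delta> \<subseteq> Q \<times> \<Sigma> \<times> Q" using nfa by (simp add: nfa_def)
  have "p \<in> I \<longrightarrow> q \<in> I"
  proof
    assume "p \<in> I"
    obtain ps \<sigma>s where pl: "ps 0 = p" "\<forall>i. (ps (Suc i), \<sigma>s i, ps i) \<in> \<delta>"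
      using play_exists[OF cmp ne nfa pQ] by blast
    then have "ps 0 \<in> I \<longrightarrow> bw_dup_pos S p q ps \<sigma>s 0 \<in> I" using S unfolding bw_winning_def by blast
    then show "q \<in> I" using \<open>p\<in>I\<close> pl by (simp add: dup0)
  qed
  moreover have "\<exists>q'. (q',a,q) \<in> \<delta> \<and> bw_sim \<delta> I p' q'" if tr: "(p',a,p) \<in> \<delta>" for p' a
  proof -
    have p'Q: "p' \<in> Q" using tr dQ by auto
    define q' where "q' = S [(p,q)] p' a"
    define S' where "S' h x b = S ((p,q)#h) x b" for h x b
    have hist: "bw_hist S p q (case_nat p ps') (case_nat a \<sigma>s') (Suc i) = (p,q) # bw_hist S' p' q' ps' \<sigma>s' i"
      if "ps' 0 = p'" for ps' \<sigma>s' i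
    proof (induction i)
      case 0 then show ?case using that by (simp add: q'_def)
    next
      case (Suc i)
      show ?case
        by (simp only: bw_hist.simps(2)[of _ _ _ _ _ "Suc i"] Suc) (simp add: S'_def)
    qed
    have dup: "bw_dup_pos S p q (case_nat p ps') (case_nat a \<sigma>s') (Suc i) = bw_dup_pos S' p' q' ps' \<sigma>s' i"
      if "ps' 0 = p'" for ps' \<sigma>s' i
      using hist[of ps' \<sigma>s' i, OF that] hist_ne[of S' p' q' ps' \<sigma>s' i] by (simp add: bw_dup_pos_def)
    have play: "case_nat p ps' 0 = p \<and> (\<forall>i. (case_nat p ps' (Suc i), case_nat a \<sigma>s' i, case_nat p ps' i) \<in> \<delta>)"
      if "ps' 0 = p'" "\<forall>i. (ps' (Suc i), \<sigma>s' i, ps' i) \<in> \<delta>" for ps' \<sigma>s'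
    proof -
      have "(case_nat p ps' (Suc i), case_nat a \<sigma>s' i, case_nat p ps' i) \<in> \<delta>" for i
        using that tr by (cases i) auto
      then show ?thesis by simp
    qed
    have win: "(bw_dup_pos S p q (case_nat p ps') (case_nat a \<sigma>s') (Suc i), case_nat a \<sigma>s' i,
                bw_dup_pos S p q (case_nat p ps') (case_nat a \<sigma>s') i) \<in> \<delta>
             \<and> (case_nat p ps' i \<in> I \<longrightarrow> bw_dup_pos S p q (case_nat p ps') (case_nat a \<sigma>s') i \<in> I)"
      if "ps' 0 = p'" "\<forall>i. (ps' (Suc i), \<sigma>s' i, ps' i) \<in> \<delta>" for ps' \<sigma>s' i
      using S play[OF that] unfolding bw_winning_def by blast
    obtain ps0 \<sigma>s0 where pl0: "ps0 0 = p'" "\<forall>i. (ps0 (Suc i), \<sigma>s0 i, ps0 i) \<in> \<delta>"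
      using play_exists[OF cmp ne nfa p'Q] by blast
    have "(q', a, q) \<in> \<delta>"
      using win[OF pl0, of 0] dup[of ps0 \<sigma>s0 0, OF pl0(1)] by (simp add: dup0)
    moreover have "bw_winning \<delta> I S' p' q'"
      unfolding bw_winning_def
    proof (intro allI impI)
      fix ps' \<sigma>s' i assume a: "ps' 0 = p' \<and> (\<forall>i. (ps' (Suc i), \<sigma>s' i, ps' i) \<in> \<delta>)"
      then show "(bw_dup_pos S' p' q' ps' \<sigma>s' (Suc i), \<sigma>s' i, bw_dup_pos S' p' q' ps' \<sigma>s' i) \<in> \<delta>
          \<and> (ps' i \<in> I \<longrightarrow> bw_dup_pos S' p' q' ps' \<sigma>s' i \<in> I)"
        using win[of ps' \<sigma>s' "Suc i"] dup[of ps' \<sigma>s' i] dup[of ps' \<sigma>s' "Suc i"] by simp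
    qed
    ultimately show ?thesis by (auto simp: bw_sim_def)
  qed
  ultimately show ?thesis by blast
qed

lemma simrel_bw_sim:
  fixes \<delta> :: "('q \<times> 's \<times> 'q) set"
  assumes dQ: "\<delta> \<subseteq> Q \<times> \<Sigma> \<times> Q"
    and R: "\<And>p q. R p q \<Longrightarrow> p \<in> Q \<Longrightarrow> (p \<in> I \<longrightarrow> q \<in> I) \<and> (\<forall>p' a. (p',a,p) \<in> \<delta> \<longrightarrow> (\<exists>q'. (q',a,q) \<in> \<delta> \<and> R p' q'))"
    and pq: "R p q" and pQ: "p \<in> Q"
  shows "bw_sim \<delta> I p q"
proof -
  define S where "S h x a = (SOME y. (y, a, snd (last h)) \<in> \<delta> \<and> R x y)" for h :: "('q \<times> 'q) list" and x a
  have "bw_winning \<delta> I S p q"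
    unfolding bw_winning_def
  proof (intro allI impI)
    fix ps \<sigma>s i assume pl: "ps 0 = p \<and> (\<forall>i. (ps (Suc i), \<sigma>s i, ps i) \<in> \<delta>)"
    have step: "(bw_dup_pos S p q ps \<sigma>s (Suc k), \<sigma>s k, bw_dup_pos S p q ps \<sigma>s k) \<in> \<delta>
        \<and> R (ps (Suc k)) (bw_dup_pos S p q ps \<sigma>s (Suc k))"
      if "ps k \<in> Q \<and> R (ps k) (bw_dup_pos S p q ps \<sigma>s k)" for k
    proof -
      have t: "(ps (Suc k), \<sigma>s k, ps k) \<in> \<delta>" using pl by blast
      then have "\<exists>y. (y, \<sigma>s k, bw_dup_pos S p q ps \<sigma>s k) \<in> \<delta> \<and> R (ps (Suc k)) y"
        using R that by blast
      then show ?thesis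
        unfolding dupSuc S_def last_hist by (rule someI_ex)
    qed
    have inv: "ps k \<in> Q \<and> R (ps k) (bw_dup_pos S p q ps \<sigma>s k)" for k
    proof (induction k)
      case 0 then show ?case using pl pQ pq by (simp add: dup0)
    next
      case (Suc k)
      have t: "(ps (Suc k), \<sigma>s k, ps k) \<in> \<delta>" using pl by blast
      then show ?case using step[OF Suc] dQ by auto
    qed
    show "(bw_dup_pos S p q ps \<sigma>s (Suc i), \<sigma>s i, bw_dup_pos S p q ps \<sigma>s i) \<in> \<delta>
          \<and> (ps i \<in> I \<longrightarrow> bw_dup_pos S p q ps \<sigma>s i \<in> I)"
      using step[OF inv[of i]] R[of "ps i" "bw_dup_pos S p q ps \<sigma>s i"] inv[of i] by blast
  qed
  then show ?thesis by (auto simp: bw_sim_def)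
qed

lemma bw_trans:
  assumes nfa: "nfa \<Sigma> Q I F \<delta>" and cmp: "complete_nfa \<Sigma> Q \<delta>" and ne: "\<Sigma> \<noteq> {}"
    and "a \<in> Q" "b \<in> Q" "bw_sim \<delta> I a b" "bw_sim \<delta> I b c"
  shows "bw_sim \<delta> I a c"
proof -
  have dQ: "\<delta> \<subseteq> Q \<times> \<Sigma> \<times> Q" using nfa by (simp add: nfa_def)
  define R where "R x z = (\<exists>y\<in>Q. bw_sim \<delta> I x y \<and> bw_sim \<delta> I y z)" for x z
  have Rp: "(x \<in> I \<longrightarrow> z \<in> I) \<and> (\<forall>x' s. (x',s,x)\<in>\<delta> \<longrightarrow> (\<exists>z'. (z',s,z)\<in>\<delta> \<and> R x' z'))"
    if Rxz: "R x z" and xQ: "x \<in> Q" for x z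
  proof -
    obtain y where y: "y\<in>Q" "bw_sim \<delta> I x y" "bw_sim \<delta> I y z" using Rxz unfolding R_def by blast
    note A1 = bw_sim_props[OF nfa cmp ne \<open>x\<in>Q\<close> y(2)]
    note A2 = bw_sim_props[OF nfa cmp ne y(1) y(3)]
    show ?thesis
    proof (intro conjI allI impI)
      assume "x\<in>I" then show "z\<in>I" using A1 A2 by blast
    next
      fix x' s assume "(x',s,x)\<in>\<delta>"
      then obtain y' where y': "(y',s,y)\<in>\<delta>" "bw_sim \<delta> I x' y'" using A1 by blast
      then obtain z' where "(z',s,z)\<in>\<delta>" "bw_sim \<delta> I y' z'" using A2 by blast
      moreover have "y'\<in>Q" using y' dQ by auto
      ultimately show "\<exists>z'. (z',s,z)\<in>\<delta> \<and> R x' z'" using y' by (auto simp: R_def)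
    qed
  qed
  show ?thesis
    by (rule simrel_bw_sim[OF dQ, of R]) (use Rp assms in \<open>auto simp: R_def\<close>)
qed

lemma bw_transfer:
  assumes nfa: "nfa \<Sigma> Q I F \<delta>" and cmp: "complete_nfa \<Sigma> Q \<delta>" and ne: "\<Sigma> \<noteq> {}"
  shows "\<forall>qs p. (\<forall>j<i. (qs j, w!j, qs (Suc j)) \<in> \<delta>) \<longrightarrow> qs 0 \<in> I \<longrightarrow> qs i \<in> Q \<longrightarrow> bw_sim \<delta> I (qs i) p
     \<longrightarrow> (\<exists>ss. ss i = p \<and> ss 0 \<in> I \<and> (\<forall>j<i. (ss j, w!j, ss (Suc j)) \<in> \<delta>) \<and> (\<forall>j\<le>i. bw_sim \<delta> I (qs j) (ss j)))"
proof (induction i)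
  case 0 show ?case
  proof (intro allI impI)
    fix qs p assume H: "\<forall>j<0. (qs j, w!j, qs (Suc j)) \<in> \<delta>" "qs 0 \<in> I" "qs 0 \<in> Q" "bw_sim \<delta> I (qs 0) p"
    then have "p\<in>I" using bw_sim_props[OF nfa cmp ne H(3) H(4)] by blast
    then show "\<exists>ss. ss 0 = p \<and> ss 0 \<in> I \<and> (\<forall>j<0. (ss j, w!j, ss (Suc j)) \<in> \<delta>) \<and> (\<forall>j\<le>0. bw_sim \<delta> I (qs j) (ss j))"
      using H by (intro exI[of _ "\<lambda>_. p"]) auto
  qed
next
  case (Suc i)
  have dQ: "\<delta> \<subseteq> Q \<times> \<Sigma> \<times> Q" using nfa by (simp add: nfa_def)
  show ?case
  proof (intro allI impI)
    fix qs p assume H: "\<forall>j<Suc i. (qs j, w!j, qs (Suc j)) \<in> \<delta>" "qs 0 \<in> I" "qs (Suc i) \<in> Q" "bw_sim \<delta> I (qs (Suc i)) p"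
    have t: "(qs i, w!i, qs (Suc i)) \<in> \<delta>" using H(1) by simp
    obtain p0 where p0: "(p0, w!i, p) \<in> \<delta>" "bw_sim \<delta> I (qs i) p0"
      using bw_sim_props[OF nfa cmp ne H(3,4)] t by blast
    have qiQ: "qs i \<in> Q" using t dQ by auto
    have Hi: "\<forall>j<i. (qs j, w!j, qs (Suc j)) \<in> \<delta>" using H(1) by simp
    obtain ss where ss: "ss i = p0" "ss 0 \<in> I" "\<forall>j<i. (ss j, w!j, ss (Suc j)) \<in> \<delta>" "\<forall>j\<le>i. bw_sim \<delta> I (qs j) (ss j)"
      using Suc.IH[rule_format, of qs p0] Hi H(2) qiQ p0(2) by blast
    define ss' where "ss' = ss(Suc i := p)"
    have 1: "\<forall>j<Suc i. (ss' j, w!j, ss' (Suc j)) \<in> \<delta>"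
    proof (intro allI impI)
      fix j assume "j < Suc i"
      then consider "j < i" | "j = i" by linarith
      then show "(ss' j, w!j, ss' (Suc j)) \<in> \<delta>"
        by cases (use ss p0 in \<open>auto simp: ss'_def\<close>)
    qed
    have 2: "\<forall>j\<le>Suc i. bw_sim \<delta> I (qs j) (ss' j)"
    proof (intro allI impI)
      fix j assume "j \<le> Suc i"
      then consider "j \<le> i" | "j = Suc i" by linarith
      then show "bw_sim \<delta> I (qs j) (ss' j)"
        by cases (use ss H in \<open>auto simp: ss'_def\<close>)
    qed
    show "\<exists>ss. ss (Suc i) = p \<and> ss 0 \<in> I \<and> (\<forall>j<Suc i. (ss j, w!j, ss (Suc j)) \<in> \<delta>) \<and> (\<forall>j\<le>Suc i. bw_sim \<delta> I (qs j) (ss j))"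
      using 1 2 ss by (intro exI[of _ ss']) (auto simp: ss'_def)
  qed
qed

lemma h_mono:
  assumes nfa: "nfa \<Sigma> Q I F \<delta>" and cmp: "complete_nfa \<Sigma> Q \<delta>" and ne: "\<Sigma> \<noteq> {}"
    and xQ: "x\<in>Q" and yQ: "y\<in>Q" and xy: "bw_sim \<delta> I x y"
  shows "card {z\<in>Q. bw_sim_strict \<delta> I y z} \<le> card {z\<in>Q. bw_sim_strict \<delta> I x z}"
proof (rule card_mono)
  show "finite {z\<in>Q. bw_sim_strict \<delta> I x z}" using nfa by (simp add: nfa_def)
  show "{z\<in>Q. bw_sim_strict \<delta> I y z} \<subseteq> {z\<in>Q. bw_sim_strict \<delta> I x z}"
  proof
    fix z assume "z \<in> {z\<in>Q. bw_sim_strict \<delta> I y z}"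
    then have z: "z\<in>Q" "bw_sim \<delta> I y z" "\<not> bw_sim \<delta> I z y" by (auto simp: bw_sim_strict_def)
    have "bw_sim \<delta> I x z" using bw_trans[OF nfa cmp ne xQ yQ xy z(2)] .
    moreover have "\<not> bw_sim \<delta> I z x"
      using bw_trans[OF nfa cmp ne z(1) xQ _ xy] z(3) by blast
    ultimately show "z \<in> {z\<in>Q. bw_sim_strict \<delta> I x z}" using z by (auto simp: bw_sim_strict_def)
  qed
qed

lemma h_strict:
  assumes nfa: "nfa \<Sigma> Q I F \<delta>" and cmp: "complete_nfa \<Sigma> Q \<delta>" and ne: "\<Sigma> \<noteq> {}"
    and xQ: "x\<in>Q" and yQ: "y\<in>Q" and xy: "bw_sim_strict \<delta> I x y"
  shows "card {z\<in>Q. bw_sim_strict \<delta> I y z} < card {z\<in>Q. bw_sim_strict \<delta> I x z}"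
proof (rule psubset_card_mono)
  show "finite {z\<in>Q. bw_sim_strict \<delta> I x z}" using nfa by (simp add: nfa_def)
  have "{z\<in>Q. bw_sim_strict \<delta> I y z} \<subseteq> {z\<in>Q. bw_sim_strict \<delta> I x z}"
  proof
    fix z assume "z \<in> {z\<in>Q. bw_sim_strict \<delta> I y z}"
    then have z: "z\<in>Q" "bw_sim \<delta> I y z" "\<not> bw_sim \<delta> I z y" by (auto simp: bw_sim_strict_def)
    have xy': "bw_sim \<delta> I x y" using xy by (simp add: bw_sim_strict_def)
    have "bw_sim \<delta> I x z" using bw_trans[OF nfa cmp ne xQ yQ xy' z(2)] .
    moreover have "\<not> bw_sim \<delta> I z x"
      using bw_trans[OF nfa cmp ne z(1) xQ _ xy'] z(3) by blast
    ultimately show "z \<in> {z\<in>Q. bw_sim_strict \<delta> I x z}" using z by (auto simp: bw_sim_strict_def)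
  qed
  moreover have "y \<in> {z\<in>Q. bw_sim_strict \<delta> I x z}" "y \<notin> {z\<in>Q. bw_sim_strict \<delta> I y z}"
    using xy yQ by (auto simp: bw_sim_strict_def)
  ultimately show "{z\<in>Q. bw_sim_strict \<delta> I y z} \<subset> {z\<in>Q. bw_sim_strict \<delta> I x z}" by blast
qed

lemma lex_lemma:
  "length L' = length L \<Longrightarrow> i < length L \<Longrightarrow> (\<forall>j<i. L'!j \<le> L!j) \<Longrightarrow> L'!i < (L!i :: nat)
    \<Longrightarrow> (L', L) \<in> lex less_than"
proof (induction L arbitrary: L' i)
  case Nil then show ?case by simp
next
  case (Cons x xs)
  then obtain y ys where L': "L' = y # ys" by (cases L') auto
  show ?case
  proof (cases i)
    case 0 then show ?thesis using Cons.prems L' by simp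
  next
    case (Suc k)
    have "y \<le> x" using Cons.prems(3) Suc L' by auto
    show ?thesis
    proof (cases "y < x")
      case True then show ?thesis using Cons.prems(1) L' by simp
    next
      case False
      then have "y = x" using \<open>y \<le> x\<close> by simp
      moreover have "(ys, xs) \<in> lex less_than"
        apply (rule Cons.IH[of ys k])
        using Cons.prems L' Suc by auto
      ultimately show ?thesis using L' by simp
    qed
  qed
qed

theorem theorem5p8:
  fixes \<Sigma> :: "'a set" and Q I F :: "'q set" and \<delta> :: "('q \<times> 'a \<times> 'q) set"
  assumes "nfa \<Sigma> Q I F \<delta>"
    and "complete_nfa \<Sigma> Q \<delta>"
  shows "lang \<Sigma> I F (prune \<delta> (prune_rel (bw_sim_strict \<delta> I) (fw_incl \<delta> F) \<delta>))
         = lang \<Sigma> I F \<delta>"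
proof -
  note nfa = assms(1) and cmp = assms(2)
  have dQ: "\<delta> \<subseteq> Q \<times> \<Sigma> \<times> Q" using nfa by (simp add: nfa_def)
  let ?P = "prune_rel (bw_sim_strict \<delta> I) (fw_incl \<delta> F) \<delta>"
  have sub: "prune \<delta> ?P \<subseteq> \<delta>" by (auto simp: prune_def)
  have "lang \<Sigma> I F (prune \<delta> ?P) \<subseteq> lang \<Sigma> I F \<delta>"
    using path_mono[OF sub] unfolding lang_def by blast
  moreover have "lang \<Sigma> I F \<delta> \<subseteq> lang \<Sigma> I F (prune \<delta> ?P)"
  proof
    fix w assume "w \<in> lang \<Sigma> I F \<delta>"
    then obtain p r where w: "w \<in> lists \<Sigma>" "p\<in>I" "r\<in>F" "path \<delta> p w r" by (auto simp: lang_def)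
    show "w \<in> lang \<Sigma> I F (prune \<delta> ?P)"
    proof (cases "\<Sigma> = {}")
      case True then have "w = []" using w(1) by (cases w) auto
      then show ?thesis using w by (auto simp: lang_def)
    next
      case False
      note ne = False
      define n where "n = length w"
      define T where "T = {qs. qs 0 \<in> I \<and> qs n \<in> F \<and> (\<forall>j<n. (qs j, w!j, qs (Suc j)) \<in> \<delta>)}"
      define h where "h x = card {y \<in> Q. bw_sim_strict \<delta> I x y}" for x
      define m where "m qs = map (\<lambda>j. h (qs j)) [0..<Suc n]" for qs :: "nat \<Rightarrow> 'q"
      obtain qs0 where "qs0 \<in> T" using w(2-4) path_trace[of \<delta> p w r] by (auto simp: T_def n_def)
      obtain qs where qsT: "qs \<in> T" and minimal: "\<And>y. (y, qs) \<in> inv_image (lex less_than) m \<Longrightarrow> y \<notin> T"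
        using wfE_min[OF wf_inv_image[OF wf_lex[OF wf_less_than]] \<open>qs0 \<in> T\<close>] by blast
      have qsT': "qs 0 \<in> I" "qs n \<in> F" "\<forall>j<n. (qs j, w!j, qs (Suc j)) \<in> \<delta>" using qsT by (auto simp: T_def)
      have allp: "\<forall>j<n. (qs j, w!j, qs (Suc j)) \<in> prune \<delta> ?P"
      proof (rule ccontr)
        assume "\<not> (\<forall>j<n. (qs j, w!j, qs (Suc j)) \<in> prune \<delta> ?P)"
        then obtain i where i: "i < n" "(qs i, w!i, qs (Suc i)) \<notin> prune \<delta> ?P" by blast
        have ti: "(qs i, w!i, qs(Suc i)) \<in> \<delta>" using qsT' i by blast
        then obtain p' r' where t': "(p', w!i, r') \<in> \<delta>" "bw_sim_strict \<delta> I (qs i) p'" "fw_incl \<delta> F (qs (Suc i)) r'"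
          using i(2) by (auto simp: prune_def prune_rel_def)
        have qiQ: "qs i \<in> Q" and p'Q: "p' \<in> Q" using ti t' dQ by auto
        have Hi: "\<forall>j<i. (qs j, w!j, qs (Suc j)) \<in> \<delta>" using qsT' i by auto
        obtain ss where ss: "ss i = p'" "ss 0 \<in> I" "\<forall>j<i. (ss j, w!j, ss (Suc j)) \<in> \<delta>" "\<forall>j\<le>i. bw_sim \<delta> I (qs j) (ss j)"
          using bw_transfer[OF nfa cmp ne, where i=i and w=w, rule_format, of qs p'] Hi qsT' qiQ t'(2)
          unfolding bw_sim_strict_def by blast
        have lend: "length (drop (Suc i) w) = n - Suc i" by (simp add: n_def)
        have "path \<delta> (qs (Suc i)) (drop (Suc i) w) (qs n)"
          unfolding path_trace lend
        proof (rule exI[of _ "\<lambda>j. qs (Suc i + j)"], intro conjI allI impI)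
          show "qs (Suc i + 0) = qs (Suc i)" by simp
          show "qs (Suc i + (n - Suc i)) = qs n" using i by simp
          fix j assume "j < n - Suc i"
          then show "(qs (Suc i + j), drop (Suc i) w ! j, qs (Suc i + Suc j)) \<in> \<delta>"
            using qsT'(3)[rule_format, of "Suc i + j"] by (simp add: n_def)
        qed
        then have "\<exists>r\<in>F. path \<delta> r' (drop (Suc i) w) r" using t'(3) qsT' by (auto simp: fw_incl_def)
        then obtain rr ts where ts: "rr \<in> F" "ts 0 = r'" "ts (n - Suc i) = rr"
            "\<forall>j<n - Suc i. (ts j, w ! (Suc i + j), ts (Suc j)) \<in> \<delta>"
          unfolding path_trace lend using i by (auto simp: n_def)
        define qs' where "qs' j = (if j \<le> i then ss j else ts (j - Suc i))" for j
        have T': "qs' \<in> T"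
        proof -
          have "\<forall>j<n. (qs' j, w!j, qs' (Suc j)) \<in> \<delta>"
          proof (intro allI impI)
            fix j assume j: "j < n"
            consider "j < i" | "j = i" | "i < j" by linarith
            then show "(qs' j, w!j, qs' (Suc j)) \<in> \<delta>"
            proof cases
              case 1 then show ?thesis using ss(3) by (simp add: qs'_def)
            next
              case 2 then show ?thesis using ss(1) ts(2) t'(1) by (simp add: qs'_def)
            next
              case 3
              then have "(ts (j - Suc i), w ! (Suc i + (j - Suc i)), ts (Suc (j - Suc i))) \<in> \<delta>"
                using ts(4)[rule_format, of "j - Suc i"] j 3 by linarith
              moreover have "Suc i + (j - Suc i) = j" "Suc j - Suc i = Suc (j - Suc i)" using 3 by auto
              ultimately show ?thesis using 3 by (simp add: qs'_def)
            qed
          qed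
          moreover have "qs' n \<in> F" using i ts by (simp add: qs'_def)
          moreover have "qs' 0 \<in> I" using ss by (simp add: qs'_def)
          ultimately show ?thesis by (simp add: T_def)
        qed
        have qsQ: "qs j \<in> Q" if "j < n" for j using qsT'(3) that dQ by blast
        have ssQ: "ss j \<in> Q" if "j \<le> i" for j
        proof (cases "j < i")
          case True then show ?thesis using ss(3) dQ by blast
        next
          case False then show ?thesis using that ss(1) p'Q by simp
        qed
        have "(m qs', m qs) \<in> lex less_than"
        proof (rule lex_lemma[of _ _ i])
          show "length (m qs') = length (m qs)" by (simp add: m_def)
          show "i < length (m qs)" using i by (simp add: m_def)
          show "\<forall>j<i. m qs' ! j \<le> m qs ! j"
          proof (intro allI impI)
            fix j assume j: "j < i"
            have "h (ss j) \<le> h (qs j)" unfolding h_def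
              using h_mono[OF nfa cmp ne qsQ ssQ] ss(4) j i by auto
            then show "m qs' ! j \<le> m qs ! j" using j i
              by (simp add: m_def qs'_def nth_append del: upt_Suc)
          qed
          have "h (ss i) < h (qs i)" unfolding h_def
            using h_strict[OF nfa cmp ne qiQ p'Q t'(2)] ss(1) by simp
          then show "m qs' ! i < m qs ! i" using i
            by (simp add: m_def qs'_def nth_append del: upt_Suc)
        qed
        then show False using minimal T' by auto
      qed
      have "path (prune \<delta> ?P) (qs 0) w (qs n)"
        unfolding path_trace using allp by (auto simp: n_def)
      then show ?thesis using qsT' w(1) by (auto simp: lang_def)
    qed
  qed
  ultimately show ?thesis by blast
qed

end
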